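(* Let $p$ be a prime with $p \equiv 1 \pmod 6$. Then for every integer $e \ge 1$ there is a unique (up to isomorphism) 6-valent first-kind Frobenius circulant with cyclic kernel of order $p^e$, namely $\Gamma(p^e) = TL_{p^e}(a_e, a_e - 1, 1)$, where $a_e \equiv (p^e+1)(v+1)/2 \pmod{p^e}$ with $v$ a solution of $x^2 \equiv -3 \pmod{p^e}$.
   Context: For $n\ge 7$, $\mathbb{Z}_n$ is the integers modulo $n$ with residue classes $[m]$, and $\mathbb{Z}_n^*$ its unit group acting on $\mathbb{Z}_n$ by multiplication. $\mathrm{Cay}(K,S)$ is the Cayley graph (vertices $K$, $x\sim y$ iff $xy^{-1}\in S$). For integers $a,b,c$ with $a,b,c,n-a,n-b,n-c$ pairwise distinct modulo $n$, $TL_n(a,b,c)=\mathrm{Cay}(\mathbb{Z}_n,\{\pm[a],\pm[b],\pm[c]\})$. A Frobenius group is a transitive, non-regular permutation group in which only the identity fixes two points; a finite one is $K\rtimes H$ with regular normal kernel $K$ and point stabiliser $H$ acting on $K$ by conjugation. A first-kind $K\rtimes H$-Frobenius graph is $\mathrm{Cay}(K,s^H)$ with $\langle s^H\rangle=K$ and $|H|$ even or $s$ an involution. A 6-valent first-kind Frobenius circulant with cyclic kernel of order $n$ is a 6-valent $TL_n(a,b,c)$ that is a first-kind $\mathbb{Z}_n\rtimes H$-Frobenius graph for some $H\le\mathbb{Z}_n^*$ such that $\mathbb{Z}_n\rtimes H$ (acting by $[x]^{([y],[m])}=[(x+y)m]$) is a Frobenius group with kernel $\mathbb{Z}_n$.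 *)

theory Defs
  imports "HOL-Number_Theory.Number_Theory"
begin

text \<open>Z_n is represented by the residues {0..<n} (as integers); graphs on Z_n are
  edge predicates on int restricted to that vertex set.\<close>

definition Zn :: "int \<Rightarrow> int set" where
  "Zn n = {0..<n}"

definition cay :: "int \<Rightarrow> int set \<Rightarrow> int \<Rightarrow> int \<Rightarrow> bool" where
  "cay n S = (\<lambda>x y. x \<in> Zn n \<and> y \<in> Zn n \<and> (x - y) mod n \<in> S)"

definition tl_set :: "int \<Rightarrow> int \<Rightarrow> int \<Rightarrow> int \<Rightarrow> int set" where
  "tl_set n a b c = {a mod n, (-a) mod n, b mod n, (-b) mod n, c mod n, (-c) mod n}"

definition tl_ok :: "int \<Rightarrow> int \<Rightarrow> int \<Rightarrow> int \<Rightarrow> bool" where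
  "tl_ok n a b c \<longleftrightarrow> card (tl_set n a b c) = 6"

definition TL :: "int \<Rightarrow> int \<Rightarrow> int \<Rightarrow> int \<Rightarrow> int \<Rightarrow> int \<Rightarrow> bool" where
  "TL n a b c = cay n (tl_set n a b c)"

definition unit_subgroup :: "int \<Rightarrow> int set \<Rightarrow> bool" where
  "unit_subgroup n H \<longleftrightarrow> H \<subseteq> {m \<in> Zn n. coprime m n} \<and> 1 mod n \<in> H \<and>
     (\<forall>h\<in>H. \<forall>k\<in>H. (h * k) mod n \<in> H)"

text \<open>The permutation group Z_n \<rtimes> H acting on Z_n by [x] \<mapsto> [(x+y)m].\<close>
definition semidirect_perms :: "int \<Rightarrow> int set \<Rightarrow> (int \<Rightarrow> int) set" where
  "semidirect_perms n H = {(\<lambda>x. ((x + y) * m) mod n) | y m. y \<in> Zn n \<and> m \<in> H}"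

definition frobenius_perm_group :: "'a set \<Rightarrow> ('a \<Rightarrow> 'a) set \<Rightarrow> bool" where
  "frobenius_perm_group \<Omega> G \<longleftrightarrow>
     (\<forall>x\<in>\<Omega>. \<forall>y\<in>\<Omega>. \<exists>g\<in>G. g x = y) \<and>
     (\<exists>g\<in>G. \<exists>x\<in>\<Omega>. g x = x \<and> (\<exists>z\<in>\<Omega>. g z \<noteq> z)) \<and>
     (\<forall>g\<in>G. (\<exists>x\<in>\<Omega>. \<exists>y\<in>\<Omega>. x \<noteq> y \<and> g x = x \<and> g y = y) \<longrightarrow> (\<forall>z\<in>\<Omega>. g z = z))"

definition frobenius_kernel :: "'a set \<Rightarrow> ('a \<Rightarrow> 'a) set \<Rightarrow> ('a \<Rightarrow> 'a) set" where
  "frobenius_kernel \<Omega> G = {g \<in> G. (\<forall>z\<in>\<Omega>. g z = z) \<or> (\<forall>z\<in>\<Omega>. g z \<noteq> z)}"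

definition transl_maps :: "int \<Rightarrow> (int \<Rightarrow> int) set" where
  "transl_maps n = {(\<lambda>x. (x + y) mod n) | y. y \<in> Zn n}"

text \<open>Z_n \<rtimes> H is a Frobenius group with kernel Z_n (kernel compared as maps on Z_n).\<close>
definition frobenius_ZnH :: "int \<Rightarrow> int set \<Rightarrow> bool" where
  "frobenius_ZnH n H \<longleftrightarrow> unit_subgroup n H \<and>
     frobenius_perm_group (Zn n) (semidirect_perms n H) \<and>
     (\<forall>g \<in> semidirect_perms n H.
        g \<in> frobenius_kernel (Zn n) (semidirect_perms n H) \<longleftrightarrow>
        (\<exists>t\<in>transl_maps n. \<forall>x\<in>Zn n. g x = t x))"

definition orbit :: "int \<Rightarrow> int set \<Rightarrow> int \<Rightarrow> int set" where
  "orbit n H s = {(s * h) mod n | h. h \<in> H}"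

inductive_set add_span :: "int \<Rightarrow> int set \<Rightarrow> int set" for n S where
  zero: "0 \<in> add_span n S"
| step: "x \<in> add_span n S \<Longrightarrow> s \<in> S \<Longrightarrow> (x + s) mod n \<in> add_span n S"

definition first_kind :: "int \<Rightarrow> int set \<Rightarrow> int \<Rightarrow> bool" where
  "first_kind n H s \<longleftrightarrow> s \<in> Zn n \<and> add_span n (orbit n H s) = Zn n \<and>
     (even (card H) \<or> (s \<noteq> 0 \<and> (2 * s) mod n = 0))"

definition six_valent_FFC :: "int \<Rightarrow> (int \<Rightarrow> int \<Rightarrow> bool) \<Rightarrow> bool" where
  "six_valent_FFC n \<Gamma> \<longleftrightarrow> (\<exists>a b c. tl_ok n a b c \<and> \<Gamma> = TL n a b c \<and>
     (\<exists>H s. frobenius_ZnH n H \<and> first_kind n H s \<and> \<Gamma> = cay n (orbit n H s)))"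

definition graph_iso :: "int \<Rightarrow> (int \<Rightarrow> int \<Rightarrow> bool) \<Rightarrow> (int \<Rightarrow> int \<Rightarrow> bool) \<Rightarrow> bool" where
  "graph_iso n G1 G2 \<longleftrightarrow> (\<exists>f. bij_betw f (Zn n) (Zn n) \<and>
     (\<forall>x\<in>Zn n. \<forall>y\<in>Zn n. G1 x y \<longleftrightarrow> G2 (f x) (f y)))"

end

theory Submission
  imports Defs
begin


lemma Zn_iff: "x \<in> Zn n \<longleftrightarrow> 0 \<le> x \<and> x < n" by (simp add: Zn_def)

lemma mod_in_Zn: "n > 0 \<Longrightarrow> x mod n \<in> Zn n" by (simp add: Zn_def)

lemma Zn_mod: "x \<in> Zn n \<Longrightarrow> x mod n = x" by (simp add: Zn_def)

lemma Zn_dvd_eq: "x \<in> Zn n \<Longrightarrow> y \<in> Zn n \<Longrightarrow> n dvd x - y \<Longrightarrow> x = y"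
  by (metis Zn_mod mod_eq_dvd_iff)

lemma span_Zn:
  assumes n: "n > 1" and S: "1 \<in> S" "S \<subseteq> Zn n"
  shows "add_span n S = Zn n"
proof
  show "add_span n S \<subseteq> Zn n"
  proof
    fix x assume "x \<in> add_span n S"
    thus "x \<in> Zn n" by induct (use n in \<open>auto simp: Zn_def\<close>)
  qed
next
  have "int k < n \<longrightarrow> int k \<in> add_span n S" for k
  proof (induction k)
    case 0 show ?case by (simp add: add_span.zero)
  next
    case (Suc k)
    show ?case
    proof
      assume "int (Suc k) < n"
      hence "int k \<in> add_span n S" using Suc by simp
      hence "(int k + 1) mod n \<in> add_span n S" using S by (intro add_span.step) auto
      moreover have "(int k + 1) mod n = int (Suc k)" using \<open>int (Suc k) < n\<close> by simp
      ultimately show "int (Suc k) \<in> add_span n S" by simp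
    qed
  qed
  thus "Zn n \<subseteq> add_span n S"
    by (auto simp: Zn_def) (metis nonneg_int_cases)
qed

lemma frob_general:
  assumes n: "n > 1" and U: "unit_subgroup n H" and m0: "m0 \<in> H" "m0 \<noteq> 1"
    and cop: "\<And>m. m \<in> H \<Longrightarrow> m \<noteq> 1 \<Longrightarrow> coprime (m - 1) n"
  shows "frobenius_ZnH n H"
proof -
  have HZ: "H \<subseteq> Zn n" using U unfolding unit_subgroup_def by auto
  have one: "1 \<in> H" using U n unfolding unit_subgroup_def by simp
  let ?G = "semidirect_perms n H"
  have trans: "\<forall>x\<in>Zn n. \<forall>y\<in>Zn n. \<exists>g\<in>?G. g x = y"
  proof (intro ballI)
    fix x y assume xy: "x \<in> Zn n" "y \<in> Zn n"
    let ?g = "\<lambda>z. ((z + (y - x) mod n) * 1) mod n"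
    have yx: "(y - x) mod n \<in> Zn n" using n mod_in_Zn by simp
    show "\<exists>g\<in>?G. g x = y"
    proof (rule bexI[where x="?g"])
      show "?g \<in> ?G" unfolding semidirect_perms_def mem_Collect_eq
        apply (rule exI[where x="(y - x) mod n"]) apply (rule exI[where x=1]) using yx one by simp
      have "?g x = (x + (y - x) mod n) mod n" by simp
      also have "\<dots> = (x + (y - x)) mod n" by (rule mod_add_right_eq)
      also have "\<dots> = y" using xy(2) Zn_mod by simp
      finally show "?g x = y" .
    qed
  qed
  have nonreg: "\<exists>g\<in>?G. \<exists>x\<in>Zn n. g x = x \<and> (\<exists>z\<in>Zn n. g z \<noteq> z)"
  proof -
    let ?g = "\<lambda>z. ((z + 0) * m0) mod n"
    have Z: "0 \<in> Zn n" "1 \<in> Zn n" using n by (auto simp: Zn_def)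
    have g1: "?g 1 \<noteq> 1" using m0 HZ Zn_mod[of m0 n] by auto
    show ?thesis
    proof (rule bexI[where x="?g"])
      show "?g \<in> ?G" unfolding semidirect_perms_def mem_Collect_eq
        apply (rule exI[where x=0]) apply (rule exI[where x=m0]) using m0 n by (simp add: Zn_def)
      show "\<exists>x\<in>Zn n. ?g x = x \<and> (\<exists>z\<in>Zn n. ?g z \<noteq> z)"
        apply (rule bexI[where x=0]) apply (rule conjI) apply simp
         apply (rule bexI[where x=1]) using g1 Z by simp_all
    qed
  qed
  have two: "\<forall>g\<in>?G. (\<exists>x\<in>Zn n. \<exists>y\<in>Zn n. x \<noteq> y \<and> g x = x \<and> g y = y) \<longrightarrow> (\<forall>z\<in>Zn n. g z = z)"
  proof (intro ballI impI)
    fix g z assume g: "g \<in> ?G" and z: "z \<in> Zn n"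
      and ex: "\<exists>x\<in>Zn n. \<exists>y\<in>Zn n. x \<noteq> y \<and> g x = x \<and> g y = y"
    from g obtain y m where gd: "g = (\<lambda>x. ((x + y) * m) mod n)" "y \<in> Zn n" "m \<in> H"
      unfolding semidirect_perms_def by blast
    from ex obtain x1 x2 where x: "x1 \<in> Zn n" "x2 \<in> Zn n" "x1 \<noteq> x2" "g x1 = x1" "g x2 = x2" by blast
    show "g z = z"
    proof (cases "m = 1")
      case True
      have "(x1 + y) mod n = x1 mod n" using x gd True Zn_mod by simp
      hence "n dvd y" by (metis add_diff_cancel_left' mod_eq_dvd_iff)
      hence "y = 0" using Zn_dvd_eq[of y n 0] gd n by (simp add: Zn_def)
      thus ?thesis using gd True z Zn_mod by simp
    next
      case False
      have c: "coprime (m - 1) n" using cop False gd by simp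
      have "((x1 + y) * m) mod n = x1 mod n" "((x2 + y) * m) mod n = x2 mod n"
        using x gd Zn_mod by simp_all
      hence "n dvd (x1 + y) * m - x1" "n dvd (x2 + y) * m - x2" by (simp_all add: mod_eq_dvd_iff)
      hence "n dvd ((x1 + y) * m - x1) - ((x2 + y) * m - x2)" by (rule dvd_diff)
      moreover have "((x1 + y) * m - x1) - ((x2 + y) * m - x2) = (x1 - x2) * (m - 1)"
        by (simp add: algebra_simps)
      ultimately have "n dvd (x1 - x2) * (m - 1)" by simp
      hence "n dvd x1 - x2" using c by (metis coprime_commute coprime_dvd_mult_left_iff)
      hence "x1 = x2" using Zn_dvd_eq x by blast
      thus ?thesis using x by simp
    qed
  qed
  have kern: "\<forall>g \<in> ?G. g \<in> frobenius_kernel (Zn n) ?G \<longleftrightarrow> (\<exists>t\<in>transl_maps n. \<forall>x\<in>Zn n. g x = t x)"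
  proof
    fix g assume g: "g \<in> ?G"
    from g obtain y m where gd: "g = (\<lambda>x. ((x + y) * m) mod n)" "y \<in> Zn n" "m \<in> H"
      unfolding semidirect_perms_def by blast
    have t0: "(\<lambda>x. (x + 0) mod n) \<in> transl_maps n" unfolding transl_maps_def mem_Collect_eq
      apply (rule exI[where x=0]) using n by (simp add: Zn_def)
    show "g \<in> frobenius_kernel (Zn n) ?G \<longleftrightarrow> (\<exists>t\<in>transl_maps n. \<forall>x\<in>Zn n. g x = t x)"
    proof
      assume k: "g \<in> frobenius_kernel (Zn n) ?G"
      show "\<exists>t\<in>transl_maps n. \<forall>x\<in>Zn n. g x = t x"
      proof (cases "m = 1")
        case True
        have "(\<lambda>x. (x + y) mod n) \<in> transl_maps n" unfolding transl_maps_def mem_Collect_eq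
          apply (rule exI[where x=y]) using gd by simp
        thus ?thesis apply (rule bexI[rotated]) using gd True by simp
      next
        case False
        have c: "coprime (m - 1) n" using cop False gd by simp
        then obtain w where w: "[(m - 1) * w = 1] (mod n)" using cong_solve_coprime_int by blast
        define x0 where "x0 = (- (y * m * w)) mod n"
        have x0Z: "x0 \<in> Zn n" unfolding x0_def using n mod_in_Zn by simp
        have d1: "n dvd x0 + y * m * w" unfolding x0_def
          by (metis add.commute diff_minus_eq_add mod_eq_dvd_iff mod_mod_trivial)
        have d2: "n dvd w * (m - 1) - 1" using w by (simp add: cong_iff_dvd_diff mult.commute)
        have "(x0 + y) * m - x0 = (x0 + y * m * w) * (m - 1) - (y * m) * (w * (m - 1) - 1)"
          by (simp add: algebra_simps)
        moreover have "n dvd (x0 + y * m * w) * (m - 1) - (y * m) * (w * (m - 1) - 1)"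
          using d1 d2 by (simp add: dvd_diff dvd_mult2 dvd_mult)
        ultimately have "n dvd (x0 + y) * m - x0" by simp
        hence "g x0 = x0" using gd x0Z Zn_mod by (metis mod_eq_dvd_iff)
        hence gid: "\<forall>z\<in>Zn n. g z = z" using k x0Z unfolding frobenius_kernel_def by auto
        show ?thesis
        proof (rule bexI[OF _ t0])
          show "\<forall>x\<in>Zn n. g x = (\<lambda>x. (x + 0) mod n) x" using gid Zn_mod by simp
        qed
      qed
    next
      assume "\<exists>t\<in>transl_maps n. \<forall>x\<in>Zn n. g x = t x"
      then obtain y' where y': "y' \<in> Zn n" "\<forall>x\<in>Zn n. g x = (x + y') mod n"
        unfolding transl_maps_def by blast
      show "g \<in> frobenius_kernel (Zn n) ?G"
      proof (cases "y' = 0")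
        case True
        thus ?thesis using g y' Zn_mod unfolding frobenius_kernel_def by auto
      next
        case False
        have "g z \<noteq> z" if z: "z \<in> Zn n" for z
        proof
          assume "g z = z"
          hence "(z + y') mod n = z mod n" using y' z Zn_mod by simp
          hence "n dvd y'" by (metis add_diff_cancel_left' mod_eq_dvd_iff)
          hence "y' = 0" using Zn_dvd_eq[of y' n 0] y' n by (simp add: Zn_def)
          thus False using False by simp
        qed
        thus ?thesis using g unfolding frobenius_kernel_def by auto
      qed
    qed
  qed
  show ?thesis unfolding frobenius_ZnH_def frobenius_perm_group_def
    by (intro conjI U trans nonreg two kern)
qed


lemma finite_Zn: "finite (Zn n)" by (simp add: Zn_def)

lemma pow_card:
  assumes n: "n > 1" and U: "unit_subgroup n H" and h: "h \<in> H"
  shows "[h ^ card H = 1] (mod n)"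
proof -
  have HZ: "H \<subseteq> Zn n" and cp: "\<And>x. x \<in> H \<Longrightarrow> coprime x n"
    and cl: "\<And>x y. x \<in> H \<Longrightarrow> y \<in> H \<Longrightarrow> (x * y) mod n \<in> H"
    using U unfolding unit_subgroup_def by auto
  have fin: "finite H" using HZ finite_Zn finite_subset by blast
  define f where "f = (\<lambda>x. (h * x) mod n)"
  have sub: "f ` H \<subseteq> H" unfolding f_def using cl h by auto
  have inj: "inj_on f H"
  proof (rule inj_onI)
    fix x y assume xy: "x \<in> H" "y \<in> H" "f x = f y"
    hence "[x * h = y * h] (mod n)" unfolding f_def cong_def by (simp add: mult.commute)
    hence "[x = y] (mod n)" using cong_mult_rcancel[OF cp[OF h]] by simp
    thus "x = y" using xy HZ Zn_mod unfolding cong_def by (metis subsetD)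
  qed
  have img: "f ` H = H" using endo_inj_surj[OF fin sub inj] .
  have "prod id H = prod id (f ` H)" using img by simp
  also have "\<dots> = prod f H" using prod.reindex[OF inj, of id] by simp
  finally have e1: "prod id H = prod f H" .
  have "[prod f H = prod (\<lambda>x. h * x) H] (mod n)"
    unfolding f_def by (rule cong_prod) (simp add: cong_def)
  also have "prod (\<lambda>x. h * x) H = h ^ card H * prod id H"
    by (simp add: prod.distrib)
  finally have "[1 * prod id H = h ^ card H * prod id H] (mod n)" using e1 by simp
  moreover have "coprime (prod id H) n" by (rule prod_coprime_left) (simp add: cp)
  ultimately show ?thesis using cong_mult_rcancel by (metis cong_sym)
qed

lemma cay_sub:
  assumes n: "n > 0" and d: "d \<in> Zn n"
  shows "cay n S d 0 \<longleftrightarrow> d \<in> S"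
proof -
  have z: "0 \<in> Zn n" using n by (simp add: Zn_def)
  show ?thesis unfolding cay_def using d z Zn_mod[OF d] by simp
qed

lemma cay_inj:
  assumes n: "n > 0" and S: "S1 \<subseteq> Zn n" "S2 \<subseteq> Zn n" and eq: "cay n S1 = cay n S2"
  shows "S1 = S2"
proof
  show "S1 \<subseteq> S2"
  proof
    fix d assume d: "d \<in> S1"
    hence dz: "d \<in> Zn n" using S by blast
    have "cay n S1 d 0" using cay_sub[OF n dz] d by simp
    hence "cay n S2 d 0" using eq by simp
    thus "d \<in> S2" using cay_sub[OF n dz] by simp
  qed
  show "S2 \<subseteq> S1"
  proof
    fix d assume d: "d \<in> S2"
    hence dz: "d \<in> Zn n" using S by blast
    have "cay n S2 d 0" using cay_sub[OF n dz] d by simp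
    hence "cay n S1 d 0" using eq by simp
    thus "d \<in> S1" using cay_sub[OF n dz] by simp
  qed
qed

lemma tl_sub: "n > 0 \<Longrightarrow> tl_set n a b c \<subseteq> Zn n" unfolding tl_set_def by (simp add: mod_in_Zn)
lemma orbit_img: "orbit n H s = (\<lambda>h. (s * h) mod n) ` H" unfolding orbit_def by (rule Setcompr_eq_image)
lemma orbit_sub: "n > 0 \<Longrightarrow> orbit n H s \<subseteq> Zn n" unfolding orbit_img by (auto simp: mod_in_Zn)



context
  fixes p e :: nat and a n :: int
  assumes pp: "prime p" and p5: "p \<ge> 5" and e1: "e \<ge> 1"
    and n_def: "n = int p ^ e" and qa: "n dvd a^2 - a + 1"
begin

lemma pint: "prime (int p)" using pp by (simp add: prime_nat_int_transfer)

lemma p_dvd_n: "int p dvd n" using e1 n_def by (simp add: dvd_power)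

lemma p_dvd_q: "int p dvd a^2 - a + 1" using dvd_trans[OF p_dvd_n qa] .

lemma nd_c: assumes "int p dvd a - c" shows "int p dvd c^2 - c + 1"
proof -
  have "c^2 - c + 1 = (a^2 - a + 1) - (a - c) * (a + c - 1)" by (simp add: power2_eq_square algebra_simps)
  thus ?thesis using p_dvd_q assms by (metis dvd_diff dvd_mult2)
qed

lemma nd_small: "\<not> int p dvd 1" "\<not> int p dvd 2" "\<not> int p dvd 3"
  using p5 zdvd_imp_le[of "int p" 1] zdvd_imp_le[of "int p" 2] zdvd_imp_le[of "int p" 3] by auto

lemma nd_a: "\<not> int p dvd a" using nd_c[of 0] nd_small by auto
lemma nd_am1: "\<not> int p dvd a - 1" using nd_c[of 1] nd_small by auto
lemma nd_ap1: "\<not> int p dvd a + 1" using nd_c[of "-1"] nd_small by auto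
lemma nd_am2: "\<not> int p dvd a - 2" using nd_c[of 2] nd_small by auto
lemma nd_mult: "\<not> int p dvd x \<Longrightarrow> \<not> int p dvd y \<Longrightarrow> \<not> int p dvd x * y"
  using pint prime_dvd_mult_iff by blast

lemma nd_pow: "\<not> int p dvd x \<Longrightarrow> \<not> int p dvd x ^ k"
  using pint prime_dvd_power by blast

lemma n_ge: "n \<ge> 5"
proof -
  have "int p ^ 1 \<le> int p ^ e" using e1 p5 by (intro power_increasing) auto
  hence "int p \<le> int p ^ e" by (simp only: power_one_right)
  moreover have "int p \<ge> 5" using p5 by simp
  ultimately show ?thesis unfolding n_def by linarith
qed

lemma qdvd: "a^2 - a + 1 = Y \<Longrightarrow> n dvd Y * Z" using qa by (metis dvd_mult2)

lemma pw: "[a^2 = a - 1] (mod n)" "[a^3 = -1] (mod n)" "[a^4 = -a] (mod n)"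
  "[a^5 = 1 - a] (mod n)" "[a^6 = 1] (mod n)"
proof -
  have "a^2 - (a - 1) = (a^2 - a + 1) * 1" by simp
  thus "[a^2 = a - 1] (mod n)" unfolding cong_iff_dvd_diff using qdvd by metis
  have "a^3 - (-1) = (a^2 - a + 1) * (a + 1)" by (simp add: power2_eq_square power3_eq_cube algebra_simps)
  thus "[a^3 = -1] (mod n)" unfolding cong_iff_dvd_diff using qdvd by metis
  have "a^4 - (-a) = (a^2 - a + 1) * (a^2 + a)" by (simp add: power2_eq_square power3_eq_cube power4_eq_xxxx algebra_simps)
  thus "[a^4 = -a] (mod n)" unfolding cong_iff_dvd_diff using qdvd by metis
  have "a^5 - (1 - a) = (a^2 - a + 1) * (a^3 + a^2 - 1)"
    by (simp add: power2_eq_square power3_eq_cube eval_nat_numeral algebra_simps)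
  thus "[a^5 = 1 - a] (mod n)" unfolding cong_iff_dvd_diff using qdvd by metis
  have "a^6 - 1 = (a^2 - a + 1) * ((a + 1) * (a^3 - 1))"
    by (simp add: power2_eq_square power3_eq_cube eval_nat_numeral algebra_simps)
  thus "[a^6 = 1] (mod n)" unfolding cong_iff_dvd_diff using qdvd by metis
qed

lemma cong_pdvd: "[x = y] (mod n) \<Longrightarrow> int p dvd x - c \<longleftrightarrow> int p dvd y - c"
proof -
  assume "[x = y] (mod n)"
  hence "int p dvd x - y" using p_dvd_n cong_iff_dvd_diff dvd_trans by blast
  moreover have "x - c = (y - c) + (x - y)" by simp
  ultimately show ?thesis using dvd_add_left_iff[of "int p" "x - y" "y - c"] by simp
qed

lemma ndk: "1 \<le> d \<Longrightarrow> d \<le> 5 \<Longrightarrow> \<not> int p dvd a^d - 1"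
proof -
  assume d: "1 \<le> d" "d \<le> 5"
  hence "d = 1 \<or> d = 2 \<or> d = 3 \<or> d = 4 \<or> d = 5" by arith
  moreover have "\<not> int p dvd a^2 - 1" using cong_pdvd[OF pw(1), of 1] nd_am2 by (simp add: algebra_simps)
  moreover have "\<not> int p dvd a^3 - 1" using cong_pdvd[OF pw(2), of 1] nd_small by simp
  moreover have "\<not> int p dvd a^4 - 1" using cong_pdvd[OF pw(3), of 1] nd_ap1 dvd_minus_iff[of "int p" "a+1"] by simp
  moreover have "\<not> int p dvd a^5 - 1" using cong_pdvd[OF pw(4), of 1] nd_a by simp
  ultimately show ?thesis using nd_am1 by (elim disjE) simp_all
qed

lemma pow_mod6: "[a^k = a^(k mod 6)] (mod n)"
proof -
  have "k = 6 * (k div 6) + k mod 6" by simp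
  hence "a^k = a^(6 * (k div 6)) * a^(k mod 6)" by (metis power_add)
  hence "a^k = (a^6)^(k div 6) * a^(k mod 6)" by (simp only: power_mult)
  moreover have "[(a^6)^(k div 6) * a^(k mod 6) = 1^(k div 6) * a^(k mod 6)] (mod n)"
    by (intro cong_mult cong_pow pw(5) cong_refl)
  ultimately show ?thesis by simp
qed

lemma distinct_p: "j < 6 \<Longrightarrow> k < 6 \<Longrightarrow> j \<noteq> k \<Longrightarrow> \<not> int p dvd a^j - a^k"
proof -
  have *: "\<not> int p dvd a^k - a^j" if "j < k" "k < 6" for j k :: nat
  proof -
    have "a^k - a^j = a^j * (a^(k-j) - 1)" using that
      by (simp add: algebra_simps flip: power_add)
    thus ?thesis using nd_mult[OF nd_pow[OF nd_a] ndk[of "k-j"]] that by simp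
  qed
  assume jk: "j < 6" "k < 6" "j \<noteq> k"
  show ?thesis
  proof (cases "j < k")
    case True
    thus ?thesis using *[of j k] \<open>k < 6\<close> dvd_minus_iff[of "int p" "a^k - a^j"] by simp
  next
    case False
    hence "k < j" using \<open>j \<noteq> k\<close> by simp
    thus ?thesis using *[of k j] \<open>j < 6\<close> by simp
  qed
qed

lemma pmod: "int p dvd x mod n \<longleftrightarrow> int p dvd x"
  using p_dvd_n by (metis dvd_mod_iff)

lemma modp: "x mod n = y mod n \<Longrightarrow> int p dvd x - y"
  using p_dvd_n by (metis dvd_trans mod_eq_dvd_iff)

lemma tl_eq: "tl_set n a (a-1) 1 = (\<lambda>k. a^k mod n) ` {..<6}"
proof -
  have l: "{..<6::nat} = {0,1,2,3,4,5}" by auto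
  have m: "a^2 mod n = (a - 1) mod n" "a^3 mod n = (-1) mod n" "a^4 mod n = (-a) mod n"
    "a^5 mod n = (1 - a) mod n" using pw unfolding cong_def by auto
  show ?thesis unfolding tl_set_def l
    apply (simp only: image_insert image_empty power_0 power_one_right m minus_diff_eq)
    by (simp only: insert_commute)
qed

lemma inj6: "inj_on (\<lambda>k. a^k mod n) {..<6}"
  unfolding inj_on_def
proof (intro ballI impI)
  fix j k assume "j \<in> {..<6::nat}" "k \<in> {..<6::nat}" "a^j mod n = a^k mod n"
  thus "j = k" using distinct_p[of j k] modp[of "a^j" "a^k"] by auto
qed

lemma card6: "card (tl_set n a (a-1) 1) = 6"
  unfolding tl_eq card_image[OF inj6] by simp


abbreviation "G \<equiv> tl_set n a (a-1) 1"

lemma n_pos: "n > 1" using n_ge by simp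

lemma memG: "x \<in> G \<longleftrightarrow> (\<exists>k<6. x = a^k mod n)"
  unfolding tl_eq image_iff lessThan_iff by blast

lemma G_Zn: "G \<subseteq> Zn n" using tl_sub n_pos by simp

lemma nd_powmod: "\<not> int p dvd a^k mod n" using pmod nd_pow[OF nd_a] by simp

lemma cop_of: "\<not> int p dvd x \<Longrightarrow> coprime x n"
  unfolding n_def using prime_imp_power_coprime[OF pint] by blast

lemma G_cop: "x \<in> G \<Longrightarrow> coprime x n" using memG nd_powmod cop_of by metis

lemma G_mult: assumes "x \<in> G" "y \<in> G" shows "(x * y) mod n \<in> G"
proof -
  obtain j k where jk: "j < 6" "k < 6" "x = a^j mod n" "y = a^k mod n" using assms memG by metis
  have "(x * y) mod n = (a^j * a^k) mod n" using jk by (simp add: mod_mult_eq)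
  also have "\<dots> = a^(j+k) mod n" by (simp add: power_add)
  also have "\<dots> = a^((j+k) mod 6) mod n" using pow_mod6 unfolding cong_def by blast
  finally have "(x * y) mod n = a^((j+k) mod 6) mod n" .
  thus ?thesis unfolding memG by (intro exI[where x="(j+k) mod 6"]) simp
qed

lemma one_G: "1 \<in> G"
proof -
  have "(1::int) = a^0 mod n" using n_pos by simp
  thus ?thesis unfolding memG by (intro exI[where x=0]) simp
qed

lemma G_unit: "unit_subgroup n G"
  unfolding unit_subgroup_def
proof (intro conjI ballI)
  show "G \<subseteq> {m \<in> Zn n. coprime m n}" using G_Zn G_cop by blast
  show "1 mod n \<in> G" using one_G n_pos by simp
  fix h k assume "h \<in> G" "k \<in> G" thus "(h * k) mod n \<in> G" by (rule G_mult)
qed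

lemma G_cop1: assumes m: "m \<in> G" "m \<noteq> 1" shows "coprime (m - 1) n"
proof -
  obtain k where k: "k < 6" "m = a^k mod n" using m memG by blast
  have "k \<noteq> 0"
  proof
    assume "k = 0" hence "m = 1 mod n" using k by simp
    thus False using m n_pos by simp
  qed
  have "[a^k mod n = a^k] (mod n)" by (simp add: cong_def)
  hence "int p dvd m - 1 \<longleftrightarrow> int p dvd a^k - 1" using cong_pdvd k by blast
  hence "\<not> int p dvd m - 1" using ndk[of k] \<open>k \<noteq> 0\<close> k by simp
  thus ?thesis using cop_of by blast
qed

lemma aG: "a mod n \<in> G" "a mod n \<noteq> 1"
proof -
  show "a mod n \<in> G" unfolding memG by (intro exI[where x=1]) simp
  show "a mod n \<noteq> 1"
  proof
    assume "a mod n = 1"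
    hence "a mod n = 1 mod n" using n_pos by simp
    thus False using modp nd_am1 by blast
  qed
qed

lemma frobG: "frobenius_ZnH n G"
  using frob_general[OF n_pos G_unit aG G_cop1] by blast

lemma orbitG: "orbit n G 1 = G"
proof -
  have "orbit n G 1 = (\<lambda>h. h mod n) ` G" unfolding orbit_img by simp
  also have "\<dots> = G"
  proof (rule image_cong[OF refl, where g=id, simplified])
    fix x assume "x \<in> G" thus "x mod n = x" using G_Zn Zn_mod by blast
  qed
  finally show ?thesis .
qed

lemma firstG: "first_kind n G 1"
  unfolding first_kind_def orbitG
  using span_Zn[OF n_pos one_G G_Zn] card6 n_pos by (simp add: Zn_def)

lemma existsG: "six_valent_FFC n (TL n a (a - 1) 1)"
  unfolding six_valent_FFC_def
proof (intro exI conjI)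
  show "tl_ok n a (a - 1) 1" unfolding tl_ok_def using card6 .
  show "TL n a (a - 1) 1 = TL n a (a - 1) 1" ..
  show "frobenius_ZnH n G" by (rule frobG)
  show "first_kind n G 1" by (rule firstG)
  show "TL n a (a - 1) 1 = cay n (orbit n G 1)" unfolding orbitG TL_def ..
qed


lemma prod6: "(\<Prod>k<6. (h - a^k)) = (h - 1) * (h - a) * (h - a^2) * (h - a^3) * (h - a^4) * (h - a^5)"
  by (simp add: eval_nat_numeral mult_ac)

lemma prod_roots: "[(\<Prod>k<6. (h - a^k)) = h^6 - 1] (mod n)"
proof -
  have "[(h - 1) * (h - a) * (h - a^2) * (h - a^3) * (h - a^4) * (h - a^5)
       = (h - 1) * (h - a) * (h - (a - 1)) * (h - (-1)) * (h - (-a)) * (h - (1 - a))] (mod n)"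
    by (intro cong_mult cong_diff cong_refl pw)
  moreover have "n dvd (h - 1) * (h - a) * (h - (a - 1)) * (h - (-1)) * (h - (-a)) * (h - (1 - a)) - (h^6 - 1)"
  proof -
    have "(h - 1) * (h - a) * (h - (a - 1)) * (h - (-1)) * (h - (-a)) * (h - (1 - a)) - (h^6 - 1)
        = (a^2 - a + 1) * ((h^2 - 1) * ((a^2 - a + 1) - 2 - 2 * h^2))"
      by (simp add: eval_nat_numeral algebra_simps)
    thus ?thesis using qdvd by metis
  qed
  hence "[(h - 1) * (h - a) * (h - (a - 1)) * (h - (-1)) * (h - (-a)) * (h - (1 - a)) = h^6 - 1] (mod n)"
    by (simp add: cong_iff_dvd_diff)
  ultimately show ?thesis unfolding prod6 by (rule cong_trans)
qed

lemma root6: assumes h: "[h^6 = 1] (mod n)" shows "\<exists>k<6. [h = a^k] (mod n)"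
proof -
  have "[(\<Prod>k<6. (h - a^k)) = 1 - 1] (mod n)"
    using cong_trans[OF prod_roots cong_diff[OF h cong_refl[of 1]]] .
  hence nd: "n dvd (\<Prod>k<6. (h - a^k))" by (simp add: cong_0_iff)
  hence "int p dvd (\<Prod>k<6. (h - a^k))" using p_dvd_n dvd_trans by blast
  hence "\<exists>k\<in>{..<6}. int p dvd h - a^k" using prime_dvd_prod_iff[of "{..<6::nat}" "int p"] pint by simp
  then obtain k where k: "k < 6" "int p dvd h - a^k" by auto
  have rest: "\<not> int p dvd (\<Prod>j\<in>{..<6} - {k}. (h - a^j))"
  proof
    assume "int p dvd (\<Prod>j\<in>{..<6} - {k}. (h - a^j))"
    hence "\<exists>j\<in>{..<6} - {k}. int p dvd h - a^j"
      using prime_dvd_prod_iff[of "{..<6::nat} - {k}" "int p"] pint by simp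
    then obtain j where j: "j \<in> {..<6} - {k}" "int p dvd h - a^j" by blast
    have "int p dvd (h - a^k) - (h - a^j)" using dvd_diff[OF k(2) j(2)] .
    moreover have "(h - a^k) - (h - a^j) = a^j - a^k" by simp
    ultimately show False using distinct_p[of j k] j k by auto
  qed
  have "(\<Prod>k<6. (h - a^k)) = (h - a^k) * (\<Prod>j\<in>{..<6} - {k}. (h - a^j))"
    using prod.remove[of "{..<6::nat}" k] k by simp
  hence "n dvd (h - a^k) * (\<Prod>j\<in>{..<6} - {k}. (h - a^j))" using nd by simp
  hence "n dvd h - a^k" using cop_of[OF rest] coprime_commute coprime_dvd_mult_left_iff by metis
  thus ?thesis using k by (auto simp: cong_iff_dvd_diff)
qed


lemma uniq: assumes "six_valent_FFC n \<Gamma>" shows "graph_iso n \<Gamma> (TL n a (a - 1) 1)"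
proof -
  obtain a' b' c' H s where ok: "tl_ok n a' b' c'" and g1: "\<Gamma> = TL n a' b' c'"
    and fr: "frobenius_ZnH n H" and fk: "first_kind n H s" and g2: "\<Gamma> = cay n (orbit n H s)"
    using assms unfolding six_valent_FFC_def by blast
  have n0: "n > 0" using n_pos by simp
  have U: "unit_subgroup n H" using fr unfolding frobenius_ZnH_def by blast
  have HZ: "H \<subseteq> Zn n" and Hc: "\<And>x. x \<in> H \<Longrightarrow> coprime x n"
    using U unfolding unit_subgroup_def by auto
  have finH: "finite H" using HZ finite_Zn finite_subset by blast
  have "tl_set n a' b' c' = orbit n H s"
    using cay_inj[OF n0 tl_sub[OF n0] orbit_sub[OF n0]] g1 g2 unfolding TL_def by simp
  hence cO: "card (orbit n H s) = 6" using ok unfolding tl_ok_def by simp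
  have sZ: "s \<in> Zn n" and span: "add_span n (orbit n H s) = Zn n"
    using fk unfolding first_kind_def by auto
  have sp: "\<not> int p dvd s"
  proof
    assume ps: "int p dvd s"
    have "x \<in> add_span n (orbit n H s) \<Longrightarrow> int p dvd x" for x
    proof (induction rule: add_span.induct)
      case zero thus ?case by simp
    next
      case (step x y)
      from step.hyps(2) obtain h where "y = (s * h) mod n" unfolding orbit_def by blast
      hence "int p dvd y" using ps pmod by simp
      hence "int p dvd x + y" using step.IH by simp
      thus ?case using pmod by simp
    qed
    moreover have "1 \<in> Zn n" using n_pos by (simp add: Zn_def)
    ultimately have "int p dvd 1" using span by blast
    thus False using nd_small(1) by blast
  qed
  have sc: "coprime s n" using cop_of[OF sp] .
  have inj: "inj_on (\<lambda>h. (s * h) mod n) H"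
  proof (rule inj_onI)
    fix x y assume xy: "x \<in> H" "y \<in> H" "(s * x) mod n = (s * y) mod n"
    hence "[x * s = y * s] (mod n)" unfolding cong_def by (simp add: mult.commute)
    hence "[x = y] (mod n)" using cong_mult_rcancel[OF sc] by simp
    thus "x = y" using xy HZ Zn_mod unfolding cong_def by (metis subsetD)
  qed
  have cH: "card H = 6" using cO card_image[OF inj] unfolding orbit_img by simp
  have HG: "H \<subseteq> G"
  proof
    fix h assume h: "h \<in> H"
    have "[h^6 = 1] (mod n)" using pow_card[OF n_pos U h] cH by simp
    then obtain k where k: "k < 6" "[h = a^k] (mod n)" using root6 by blast
    have "h = a^k mod n" using k(2) Zn_mod[of h n] h HZ unfolding cong_def by auto
    thus "h \<in> G" unfolding memG using k(1) by blast
  qed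
  have HeqG: "H = G" using card_subset_eq[OF _ HG] finite_subset[OF G_Zn finite_Zn] cH card6 by simp
  obtain t where t: "[s * t = 1] (mod n)" using cong_solve_coprime_int[OF sc] by blast
  define f where "f = (\<lambda>x. (t * x) mod n)"
  have tc: "coprime t n" using t coprime_iff_invertible_int by (metis mult.commute)
  have fZ: "f ` Zn n \<subseteq> Zn n" unfolding f_def using n0 mod_in_Zn by auto
  have finj: "inj_on f (Zn n)"
  proof (rule inj_onI)
    fix x y assume xy: "x \<in> Zn n" "y \<in> Zn n" "f x = f y"
    hence "[x * t = y * t] (mod n)" unfolding cong_def f_def by (simp add: mult.commute)
    hence "[x = y] (mod n)" using cong_mult_rcancel[OF tc] by simp
    thus "x = y" using xy Zn_mod unfolding cong_def by metis
  qed
  have bij: "bij_betw f (Zn n) (Zn n)"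
    unfolding bij_betw_def using finj endo_inj_surj[OF finite_Zn fZ finj] by blast
  have edge: "\<Gamma> x y \<longleftrightarrow> TL n a (a - 1) 1 (f x) (f y)" if xy: "x \<in> Zn n" "y \<in> Zn n" for x y
  proof -
    have fxy: "f x \<in> Zn n" "f y \<in> Zn n" using fZ xy by auto
    have L: "\<Gamma> x y \<longleftrightarrow> (x - y) mod n \<in> orbit n H s" unfolding g2 cay_def using xy by simp
    have R: "TL n a (a - 1) 1 (f x) (f y) \<longleftrightarrow> (t * (x - y)) mod n \<in> H"
    proof -
      have "(f x - f y) mod n = (t * x - t * y) mod n" unfolding f_def by (simp add: mod_diff_eq)
      also have "\<dots> = (t * (x - y)) mod n" by (simp add: algebra_simps)
      finally show ?thesis unfolding TL_def cay_def HeqG using fxy by simp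
    qed
    show ?thesis unfolding L R
    proof
      assume "(x - y) mod n \<in> orbit n H s"
      then obtain h where h: "h \<in> H" "(x - y) mod n = (s * h) mod n" unfolding orbit_def by blast
      have "[t * (x - y) = t * (s * h)] (mod n)" using h(2) unfolding cong_def by (metis mod_mult_right_eq)
      moreover have "[t * (s * h) = 1 * h] (mod n)" using t
        by (metis cong_scalar_right mult.assoc mult.commute)
      ultimately have "[t * (x - y) = h] (mod n)" using cong_trans by fastforce
      hence "(t * (x - y)) mod n = h" using h(1) HZ Zn_mod unfolding cong_def by (metis subsetD)
      thus "(t * (x - y)) mod n \<in> H" using h(1) by simp
    next
      assume hH: "(t * (x - y)) mod n \<in> H"
      define h where "h = (t * (x - y)) mod n"
      have "[s * h = s * (t * (x - y))] (mod n)" unfolding h_def cong_def by (metis mod_mult_right_eq)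
      moreover have "[s * (t * (x - y)) = 1 * (x - y)] (mod n)" using t
        by (metis cong_scalar_right mult.assoc)
      ultimately have "[s * h = x - y] (mod n)" using cong_trans by fastforce
      hence "(x - y) mod n = (s * h) mod n" unfolding cong_def by simp
      thus "(x - y) mod n \<in> orbit n H s" unfolding orbit_def using hH h_def by blast
    qed
  qed
  show ?thesis unfolding graph_iso_def using bij edge by blast
qed

end

theorem corollary2p3:
  fixes p :: nat and e :: nat and v :: int
  assumes "prime p" and "p mod 6 = 1" and "e \<ge> 1"
    and "[v^2 = -3] (mod (int p ^ e))"
  shows "let n = int p ^ e; a = ((n + 1) div 2) * (v + 1) in
           tl_ok n a (a - 1) 1 \<and> six_valent_FFC n (TL n a (a - 1) 1) \<and>
           (\<forall>\<Gamma>. six_valent_FFC n \<Gamma> \<longrightarrow> graph_iso n \<Gamma> (TL n a (a - 1) 1))"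
proof -
  define n where "n = int p ^ e"
  define c where "c = (n + 1) div 2"
  define a where "a = c * (v + 1)"
  have p1: "p \<noteq> 1" using assms(1) by auto
  have p5: "p \<ge> 5" using assms(2) p1 by presburger
  have oddp: "odd p" using assms(2) by presburger
  hence "odd n" unfolding n_def by simp
  hence c2: "2 * c = n + 1" unfolding c_def by presburger
  have "4 * (a^2 - a + 1) = (2 * c)^2 * (v + 1)^2 - 2 * (2 * c) * (v + 1) + 4"
    unfolding a_def by (simp add: power2_eq_square algebra_simps)
  also have "\<dots> = (v^2 - (-3)) + n * ((v + 1)^2 * (n + 2) - 2 * (v + 1))"
    unfolding c2 by (simp add: power2_eq_square algebra_simps)
  finally have eq4: "4 * (a^2 - a + 1) = (v^2 - (-3)) + n * ((v + 1)^2 * (n + 2) - 2 * (v + 1))" .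
  have "n dvd v^2 - (-3)" using assms(4) unfolding n_def cong_iff_dvd_diff .
  hence "n dvd 4 * (a^2 - a + 1)" unfolding eq4 by simp
  moreover have "\<not> int p dvd 4" using p5 zdvd_imp_le[of "int p" 4] by auto
  hence "coprime 4 n" unfolding n_def
    using prime_imp_power_coprime[of "int p" 4 e] assms(1) by (simp add: prime_nat_int_transfer)
  ultimately have qa: "n dvd a^2 - a + 1"
    by (metis coprime_commute coprime_dvd_mult_right_iff)
  note ctx = assms(1) p5 assms(3) n_def qa
  have "tl_ok n a (a - 1) 1" unfolding tl_ok_def using card6[OF ctx] .
  moreover have "six_valent_FFC n (TL n a (a - 1) 1)" using existsG[OF ctx] .
  moreover have "\<forall>\<Gamma>. six_valent_FFC n \<Gamma> \<longrightarrow> graph_iso n \<Gamma> (TL n a (a - 1) 1)"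
    using uniq[OF ctx] by blast
  ultimately show ?thesis unfolding Let_def n_def[symmetric] c_def[symmetric] a_def[symmetric] by blast
qed

end
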